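(* Let $y>0$ and $\mathscr{A}_n(y)=\dfrac{1}{y^2+\pi^2n^2}$, $n\in\mathbb{Z}$. Then the discrete Hilbert transform of $(\mathscr{A}_n(y))_{n\in\mathbb{Z}}$, i.e. the sequence $\frac{1}{\pi}\sum_{m\in\mathbb{Z}\setminus\{0\}}\frac{\mathscr{A}_{n-m}(y)}{m}$, is given by \[ \mathscr{B}_n(y)=\frac{\pi n\coth y}{y(y^2+\pi^2n^2)}-\frac{2\pi n}{(y^2+\pi^2n^2)^2},\qquad n\in\mathbb{Z}. \] *)

theory Defs
  imports "HOL-Analysis.Analysis"
begin

definition scrA :: "int \<Rightarrow> real \<Rightarrow> real" where
  "scrA n y = 1 / (y\<^sup>2 + pi\<^sup>2 * (real_of_int n)\<^sup>2)"

definition scrB :: "int \<Rightarrow> real \<Rightarrow> real" where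
  "scrB n y = pi * real_of_int n * (cosh y / sinh y) / (y * (y\<^sup>2 + pi\<^sup>2 * (real_of_int n)\<^sup>2))
              - 2 * pi * real_of_int n / (y\<^sup>2 + pi\<^sup>2 * (real_of_int n)\<^sup>2)\<^sup>2"

definition disc_hilbert :: "(int \<Rightarrow> real) \<Rightarrow> int \<Rightarrow> real" where
  "disc_hilbert a n = (1 / pi) * infsum (\<lambda>m. a (n - m) / real_of_int m) (UNIV - {0})"

end

theory Submission
  imports Defs
begin

lemma cancel_aux:
  fixes a s c X :: "'a::field"
  assumes "a \<noteq> 0" "s \<noteq> 0" "a / s * X = - (a * (c * a)) / s^2"
  shows "X = - a * (c / s)"
proof -
  have "X = (s / a) * (a / s * X)" using assms(1,2) by simp
  also have "\<dots> = (s / a) * (- (a * (c * a)) / s^2)" by (simp only: assms(3))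
  also have "\<dots> = - a * (c / s)" using assms(1,2) by (simp add: power2_eq_square field_simps)
  finally show ?thesis .
qed

lemma digamma_refl:
  fixes z :: complex assumes "Im z \<noteq> 0"
  shows "Digamma z - Digamma (1 - z) = - of_real pi * cot (of_real pi * z)"
proof -
  have nz1: "z \<notin> \<int>\<^sub>\<le>\<^sub>0" using assms by (auto elim!: nonpos_Ints_cases)
  have nz2: "1 - z \<notin> \<int>\<^sub>\<le>\<^sub>0" using assms by (auto elim!: nonpos_Ints_cases dest!: arg_cong[where f=Im])
  have G: "Gamma z * Gamma (1 - z) \<noteq> 0" using nz1 nz2 by (simp add: Gamma_eq_zero_iff)
  have s: "sin (of_real pi * z) \<noteq> 0"
    using G Gamma_reflection_complex[of z] by auto
  have g1: "(Gamma has_field_derivative Gamma z * Digamma z) (at z)"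
    by (rule has_field_derivative_Gamma[OF nz1])
  have g2: "((\<lambda>w. Gamma (1 - w)) has_field_derivative Gamma (1 - z) * Digamma (1 - z) * (-1)) (at z)"
  proof -
    have a: "(Gamma has_field_derivative Gamma (1 - z) * Digamma (1 - z)) (at (1 - z))"
      by (rule has_field_derivative_Gamma[OF nz2])
    have b: "((\<lambda>w. 1 - w) has_field_derivative (-1)) (at z)"
      by (auto intro!: derivative_eq_intros)
    show ?thesis using DERIV_chain2[OF a b] by simp
  qed
  have d1: "((\<lambda>w. Gamma w * Gamma (1 - w)) has_field_derivative
      Gamma z * Digamma z * Gamma (1 - z) + Gamma (1 - z) * Digamma (1 - z) * (-1) * Gamma z) (at z)"
    using DERIV_mult[OF g1 g2] .
  have d2: "((\<lambda>w. of_real pi / sin (of_real pi * w)) has_field_derivative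
      - (of_real pi * (cos (of_real pi * z) * of_real pi)) / (sin (of_real pi * z))^2) (at z)"
    using s by (auto intro!: derivative_eq_intros simp: power2_eq_square)
  have eq: "(\<lambda>w::complex. Gamma w * Gamma (1 - w)) = (\<lambda>w::complex. of_real pi / sin (of_real pi * w))"
    using Gamma_reflection_complex by (auto simp: fun_eq_iff)
  have "Gamma z * Digamma z * Gamma (1 - z) + Gamma (1 - z) * Digamma (1 - z) * (-1) * Gamma z
      = - (of_real pi * (cos (of_real pi * z) * of_real pi)) / (sin (of_real pi * z))^2"
    using DERIV_unique d1 d2 eq by metis
  hence "(Gamma z * Gamma (1 - z)) * (Digamma z - Digamma (1 - z))
      = - (of_real pi * (cos (of_real pi * z) * of_real pi)) / (sin (of_real pi * z))^2"
    by (simp add: algebra_simps)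
  hence "(of_real pi / sin (of_real pi * z)) * (Digamma z - Digamma (1 - z))
      = - (of_real pi * (cos (of_real pi * z) * of_real pi)) / (sin (of_real pi * z))^2"
    using Gamma_reflection_complex[of z] by simp
  from cancel_aux[OF _ s this] show ?thesis by (simp add: cot_def)
qed

lemma cos_i_real: "cos (\<i> * complex_of_real x) = complex_of_real (cosh x)"
  using cosh_real[of x] by (simp add: cosh_def exp_minus)

lemma sin_i_real: "sin (\<i> * complex_of_real x) = \<i> * complex_of_real (sinh x)"
proof -
  have "sin (\<i> * complex_of_real x) = \<i> * ((exp (complex_of_real x) - inverse (exp (complex_of_real x))) / 2)"
    by (rule sin_i_times)
  also have "\<dots> = \<i> * complex_of_real ((exp x - inverse (exp x)) / 2)"
    by (simp only: exp_of_real of_real_diff of_real_divide of_real_inverse of_real_numeral)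
  also have "(exp x - inverse (exp x)) / 2 = sinh x"
    by (simp add: sinh_def exp_minus)
  finally show ?thesis .
qed
lemma coth_series_complex:
  fixes t :: real assumes t: "t > 0"
  defines "z \<equiv> \<i> * complex_of_real t"
  shows "(\<lambda>k::nat. inverse (1 - z + of_nat k) - inverse (z + of_nat (Suc k)))
           sums (Digamma z - Digamma (1 - z) + inverse z)"
proof -
  have z0: "z \<noteq> 0" and z1: "1 - z \<noteq> 0" using t by (auto simp: z_def complex_eq_iff)
  have S1: "(\<lambda>k. inverse (of_nat (Suc k)) - inverse (z + of_nat k)) sums (Digamma z + euler_mascheroni)"
    using summable_Digamma[OF z0] by (simp add: Digamma_def summable_sums)
  have S2: "(\<lambda>k. inverse (of_nat (Suc k)) - inverse ((1 - z) + of_nat k)) sums (Digamma (1 - z) + euler_mascheroni)"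
    using summable_Digamma[OF z1] by (simp add: Digamma_def summable_sums)
  have T: "(\<lambda>k. inverse (z + of_nat (Suc k)) - inverse (z + of_nat k)) sums (0 - inverse (z + of_nat 0))"
    by (intro telescope_sums filterlim_compose[OF tendsto_inverse_0]
              tendsto_add_filterlim_at_infinity[OF tendsto_const] tendsto_of_nat)
  have "(\<lambda>k. (inverse (of_nat (Suc k)) - inverse (z + of_nat k))
           - (inverse (of_nat (Suc k)) - inverse ((1 - z) + of_nat k))
           - (inverse (z + of_nat (Suc k)) - inverse (z + of_nat k)))
        sums ((Digamma z + euler_mascheroni) - (Digamma (1 - z) + euler_mascheroni) - (0 - inverse (z + of_nat 0)))"
    by (intro sums_diff S1 S2 T)
  thus ?thesis by (simp add: algebra_simps)
qed

lemma coth_series: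
  fixes t :: real assumes t: "t > 0"
  shows "(\<lambda>k::nat. 2 * t / ((real k + 1)^2 + t^2)) sums (pi * cosh (pi * t) / sinh (pi * t) - 1 / t)"
proof -
  define z where "z = \<i> * complex_of_real t"
  have Imz: "Im z \<noteq> 0" using t by (simp add: z_def)
  have sh: "sinh (pi * t) \<noteq> 0" using t by simp
  have val: "Digamma z - Digamma (1 - z) + inverse z
      = \<i> * complex_of_real (pi * cosh (pi * t) / sinh (pi * t) - 1 / t)"
  proof -
    have "cot (complex_of_real pi * z) = cos (\<i> * complex_of_real (pi * t)) / sin (\<i> * complex_of_real (pi * t))"
      by (simp add: cot_def z_def mult_ac)
    also have "\<dots> = complex_of_real (cosh (pi * t)) / (\<i> * complex_of_real (sinh (pi * t)))"
      by (simp only: cos_i_real sin_i_real)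
    finally have c: "cot (complex_of_real pi * z) = complex_of_real (cosh (pi * t)) / (\<i> * complex_of_real (sinh (pi * t)))" .
    show ?thesis
      unfolding digamma_refl[OF Imz] c using t sh
      by (simp add: z_def field_simps)
  qed
  have trm: "inverse (1 - z + of_nat k) - inverse (z + of_nat (Suc k))
      = \<i> * complex_of_real (2 * t / ((real k + 1)^2 + t^2))" for k
  proof -
    have n1: "1 - z + of_nat k \<noteq> 0" and n2: "z + of_nat (Suc k) \<noteq> 0"
      and n3: "(real k + 1)^2 + t^2 \<noteq> 0"
      using t by (auto simp: z_def complex_eq_iff add_pos_pos)
    show ?thesis using n1 n2 n3
      by (simp add: z_def field_simps power2_eq_square complex_eq_iff)
  qed
  have "(\<lambda>k. \<i> * complex_of_real (2 * t / ((real k + 1)^2 + t^2)))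
         sums (\<i> * complex_of_real (pi * cosh (pi * t) / sinh (pi * t) - 1 / t))"
    using coth_series_complex[OF t, folded z_def] unfolding trm val by simp
  hence "(\<lambda>k. - \<i> * (\<i> * complex_of_real (2 * t / ((real k + 1)^2 + t^2))))
         sums (- \<i> * (\<i> * complex_of_real (pi * cosh (pi * t) / sinh (pi * t) - 1 / t)))"
    by (rule sums_mult)
  hence "(\<lambda>k. complex_of_real (2 * t / ((real k + 1)^2 + t^2)))
         sums (complex_of_real (pi * cosh (pi * t) / sinh (pi * t) - 1 / t))"
    by simp
  thus ?thesis by (simp only: sums_of_real_iff)
qed

lemma odd_sum_zero:
  fixes f :: "int \<Rightarrow> real"
  assumes odd: "\<And>j. f (- j) = - f j"
  shows "sum f {-M..M} = 0"
proof -
  have im: "uminus ` {-M..M} = {-M..M}"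
    by (auto simp: image_iff intro!: bexI[where x="- _"])
  have "sum f {-M..M} = sum f (uminus ` {-M..M})" by (simp only: im)
  also have "\<dots> = sum (\<lambda>j. f (- j)) {-M..M}" by (subst sum.reindex) (auto simp: o_def)
  also have "\<dots> = - sum f {-M..M}" by (simp add: odd sum_negf)
  finally show ?thesis by simp
qed

lemma sym_lim:
  fixes f :: "int \<Rightarrow> real"
  assumes odd: "\<And>j. f (- j) = - f j"
  assumes lim: "\<And>c. (\<lambda>N::nat. f (c + int N)) \<longlonglongrightarrow> 0"
  shows "(\<lambda>N::nat. sum f {c - int N .. c + int N}) \<longlonglongrightarrow> 0"
proof (induct c rule: int_induct[where k=0])
  case base
  show ?case using odd_sum_zero[of f, OF odd] by simp
next
  case (step1 c)
  have lim2: "(\<lambda>N::nat. f (c - int N)) \<longlonglongrightarrow> 0"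
  proof -
    have "(\<lambda>N::nat. - f (- c + int N)) \<longlonglongrightarrow> - 0" by (intro tendsto_minus lim)
    moreover have "(\<lambda>N::nat. - f (- c + int N)) = (\<lambda>N. f (c - int N))"
    proof (rule ext)
      fix N :: nat
      have "f (- (c - int N)) = - f (c - int N)" by (rule odd)
      thus "- f (- c + int N) = f (c - int N)" by simp
    qed
    ultimately show ?thesis by simp
  qed
  have eq: "sum f {c + 1 - int N .. c + 1 + int N} = sum f {c - int N .. c + int N} - f (c - int N) + f (c + 1 + int N)" for N
  proof -
    have "{c - int N .. c + 1 + int N} = insert (c + 1 + int N) {c - int N .. c + int N}" by auto
    hence a: "sum f {c - int N .. c + 1 + int N} = f (c + 1 + int N) + sum f {c - int N .. c + int N}" by simp
    have "{c - int N .. c + 1 + int N} = insert (c - int N) {c + 1 - int N .. c + 1 + int N}" by auto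
    hence b: "sum f {c - int N .. c + 1 + int N} = f (c - int N) + sum f {c + 1 - int N .. c + 1 + int N}" by simp
    show ?thesis using a b by simp
  qed
  have l3: "(\<lambda>N::nat. f (c + 1 + int N)) \<longlonglongrightarrow> 0" using lim[of "c+1"] .
  have "(\<lambda>N. sum f {c - int N .. c + int N} - f (c - int N) + f (c + 1 + int N)) \<longlonglongrightarrow> 0 - 0 + 0"
    by (intro tendsto_intros step1(2) lim2 l3)
  thus ?case by (simp add: eq)
next
  case (step2 c)
  have lim2: "(\<lambda>N::nat. f (c - 1 - int N)) \<longlonglongrightarrow> 0"
  proof -
    have "(\<lambda>N::nat. - f (- c + 1 + int N)) \<longlonglongrightarrow> - 0" by (intro tendsto_minus lim)
    moreover have "(\<lambda>N::nat. - f (- c + 1 + int N)) = (\<lambda>N. f (c - 1 - int N))"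
    proof (rule ext)
      fix N :: nat
      have "- f (- c + 1 + int N) = - f (- (c - 1 - int N))"
        by (rule arg_cong[where f="\<lambda>x. - f x"]) simp
      also have "\<dots> = f (c - 1 - int N)" by (simp only: odd minus_minus)
      finally show "- f (- c + 1 + int N) = f (c - 1 - int N)" .
    qed
    ultimately show ?thesis by simp
  qed
  have eq: "sum f {c - 1 - int N .. c - 1 + int N} = sum f {c - int N .. c + int N} + f (c - 1 - int N) - f (c + int N)" for N
  proof -
    have "{c - 1 - int N .. c + int N} = insert (c + int N) {c - 1 - int N .. c - 1 + int N}" by auto
    hence a: "sum f {c - 1 - int N .. c + int N} = f (c + int N) + sum f {c - 1 - int N .. c - 1 + int N}" by simp
    have "{c - 1 - int N .. c + int N} = insert (c - 1 - int N) {c - int N .. c + int N}" by auto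
    hence b: "sum f {c - 1 - int N .. c + int N} = f (c - 1 - int N) + sum f {c - int N .. c + int N}" by simp
    show ?thesis using a b by simp
  qed
  have l3: "(\<lambda>N::nat. f (c + int N)) \<longlonglongrightarrow> 0" using lim[of c] .
  have "(\<lambda>N. sum f {c - int N .. c + int N} + f (c - 1 - int N) - f (c + int N)) \<longlonglongrightarrow> 0 + 0 - 0"
    by (intro tendsto_intros step2(2) lim2 l3)
  thus ?case by (simp add: eq)
qed

lemma has_sum_seq:
  fixes f :: "'a \<Rightarrow> real"
  assumes hs: "(f has_sum s) A"
  assumes sub: "\<And>N. finite (F N) \<and> F N \<subseteq> A"
  assumes ev: "\<And>K. finite K \<Longrightarrow> K \<subseteq> A \<Longrightarrow> eventually (\<lambda>N. K \<subseteq> F N) sequentially"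
  shows "(\<lambda>N. sum f (F N)) \<longlonglongrightarrow> s"
proof -
  have fl: "filterlim F (finite_subsets_at_top A) sequentially"
    unfolding filterlim_def le_filter_def eventually_filtermap
  proof (intro allI impI)
    fix P assume "eventually P (finite_subsets_at_top A)"
    hence "\<exists>X. finite X \<and> X \<subseteq> A \<and> (\<forall>Y. finite Y \<and> X \<subseteq> Y \<and> Y \<subseteq> A \<longrightarrow> P Y)"
      by (simp only: eventually_finite_subsets_at_top)
    then obtain X where X1: "finite X" and X2: "X \<subseteq> A" and X3: "\<forall>Y. finite Y \<and> X \<subseteq> Y \<and> Y \<subseteq> A \<longrightarrow> P Y"
      by blast
    show "eventually (\<lambda>N. P (F N)) sequentially"
      using ev[OF X1 X2]
    proof eventually_elim
      case (elim N)
      have "finite (F N)" "F N \<subseteq> A" using sub[of N] by auto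
      with elim X3 show "P (F N)" by blast
    qed
  qed
  have "(sum f \<longlongrightarrow> s) (finite_subsets_at_top A)" using hs unfolding has_sum_def .
  from filterlim_compose[OF this fl] show ?thesis by (simp only: o_def)
qed

lemma aux2:
  fixes y p Q :: real
  assumes "y > 0" "p > 0" "Q > 0"
  shows "2 * (y / p) / (Q / p^2) / (2 * y * p) = 1 / Q"
  using assms by (simp add: field_simps power2_eq_square)

lemma scrA_nat_sums:
  fixes y :: real assumes y: "y > 0"
  shows "(\<lambda>k::nat. scrA (int k + 1) y) sums ((cosh y / sinh y - 1 / y) / (2 * y))"
proof -
  have t: "y / pi > 0" using y by simp
  have "(\<lambda>k::nat. 2 * (y / pi) / ((real k + 1)^2 + (y / pi)^2) / (2 * y * pi))
          sums ((pi * cosh (pi * (y / pi)) / sinh (pi * (y / pi)) - 1 / (y / pi)) / (2 * y * pi))"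
    by (intro sums_divide coth_series t)
  moreover have "(\<lambda>k::nat. 2 * (y / pi) / ((real k + 1)^2 + (y / pi)^2) / (2 * y * pi))
      = (\<lambda>k::nat. scrA (int k + 1) y)"
  proof (rule ext)
    fix k :: nat
    have p: "y\<^sup>2 + pi\<^sup>2 * (real k + 1)\<^sup>2 > 0" using y by (intro add_pos_nonneg) auto
    have e: "(real k + 1)^2 + (y / pi)^2 = (y\<^sup>2 + pi\<^sup>2 * (real k + 1)\<^sup>2) / pi\<^sup>2"
      by (simp add: field_simps)
    show "2 * (y / pi) / ((real k + 1)^2 + (y / pi)^2) / (2 * y * pi) = scrA (int k + 1) y"
      unfolding e scrA_def using aux2[OF y pi_gt_zero p] by simp
  qed
  moreover have "(pi * cosh (pi * (y / pi)) / sinh (pi * (y / pi)) - 1 / (y / pi)) / (2 * y * pi)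
      = (cosh y / sinh y - 1 / y) / (2 * y)"
    using y pi_gt_zero by (simp add: field_simps)
  ultimately show ?thesis by simp
qed

lemma scrA_nonneg: "scrA k y \<ge> 0"
  unfolding scrA_def by simp

lemma scrA_minus: "scrA (- k) y = scrA k y"
  unfolding scrA_def by simp

lemma scrA_has_sum:
  fixes y :: real assumes y: "y > 0"
  shows "((\<lambda>k. scrA k y) has_sum (cosh y / sinh y / y)) UNIV"
proof -
  define S where "S = (cosh y / sinh y - 1 / y) / (2 * y)"
  have hn: "((\<lambda>k::nat. scrA (int k + 1) y) has_sum S) UNIV"
    unfolding S_def by (rule sums_nonneg_imp_has_sum[OF scrA_nat_sums[OF y] scrA_nonneg])
  have inj1: "inj_on (\<lambda>k::nat. int k + 1) UNIV" by (auto simp: inj_on_def)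
  have inj2: "inj_on (\<lambda>k::nat. - (int k + 1)) UNIV" by (auto simp: inj_on_def)
  have h1: "((\<lambda>k. scrA k y) has_sum S) ((\<lambda>k::nat. int k + 1) ` UNIV)"
    using has_sum_reindex[OF inj1, of "\<lambda>k. scrA k y" S] hn by (simp add: o_def)
  have h2: "((\<lambda>k. scrA k y) has_sum S) ((\<lambda>k::nat. - (int k + 1)) ` UNIV)"
    using has_sum_reindex[OF inj2, of "\<lambda>k. scrA k y" S] hn by (simp add: o_def scrA_minus del: minus_add_distrib)
  have r1: "(\<lambda>k::nat. int k + 1) ` UNIV = {0<..}"
  proof -
    { fix j :: int assume "j > 0"
      hence "j \<in> range (\<lambda>k::nat. int k + 1)" by (intro image_eqI[where x="nat (j - 1)"]) auto }
    thus ?thesis by fastforce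
  qed
  have r2: "(\<lambda>k::nat. - (int k + 1)) ` UNIV = {..<0}"
  proof -
    { fix j :: int assume "j < 0"
      hence "j \<in> range (\<lambda>k::nat. - (int k + 1))" by (intro image_eqI[where x="nat (- j - 1)"]) auto }
    thus ?thesis by fastforce
  qed
  have "((\<lambda>k. scrA k y) has_sum (S + S)) ({0<..} \<union> {..<0})"
    using h1 h2 unfolding r1 r2 by (intro has_sum_Un_disjoint) auto
  hence "((\<lambda>k. scrA k y) has_sum (scrA 0 y + (S + S))) (insert 0 ({0<..} \<union> {..<0}))"
    by (intro has_sum_insert) auto
  moreover have "insert 0 ({0<..} \<union> {..<0}) = (UNIV :: int set)" by auto
  moreover have "scrA 0 y + (S + S) = cosh y / sinh y / y"
    using y unfolding S_def scrA_def by (simp add: field_simps power2_eq_square)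
  ultimately show ?thesis by simp
qed

lemma inv_int_lim: "(\<lambda>N::nat. 1 / (real_of_int c + real N)) \<longlonglongrightarrow> 0"
proof -
  have "filterlim (\<lambda>N::nat. real_of_int c + real N) at_top sequentially"
    by (rule filterlim_tendsto_add_at_top[OF tendsto_const filterlim_real_sequentially])
  thus ?thesis
    by (intro tendsto_divide_0[OF tendsto_const] filterlim_at_top_imp_at_infinity)
qed
lemma inv_int_lim': "(\<lambda>N::nat. 1 / real_of_int (c + int N)) \<longlonglongrightarrow> 0"
  using inv_int_lim[of c] by (simp only: of_int_add of_int_of_nat_eq)
lemma inv_sym_lim: "(\<lambda>N::nat. \<Sum>m\<in>{c - int N .. c + int N}. 1 / real_of_int m) \<longlonglongrightarrow> 0"
proof (rule sym_lim)
  fix j :: int show "1 / real_of_int (- j) = - (1 / real_of_int j)" by simp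
next
  fix c :: int show "(\<lambda>N::nat. 1 / real_of_int (c + int N)) \<longlonglongrightarrow> 0" by (rule inv_int_lim')
qed

lemma G_lim:
  fixes h :: "int \<Rightarrow> real" and n :: int
  assumes odd: "\<And>j. h (- j) = - h j"
  shows "(\<lambda>N::nat. \<Sum>m\<in>{n - int N .. n + int N} - {0}. 1 / real_of_int m - h (m - n)) \<longlonglongrightarrow> h (- n)"
proof -
  let ?G = "\<lambda>m. 1 / real_of_int m - h (m - n)"
  have hs: "(\<Sum>m\<in>{n - int N .. n + int N}. h (m - n)) = 0" for N
  proof -
    have im: "(\<lambda>j. j + n) ` {- int N .. int N} = {n - int N .. n + int N}"
    proof safe
      fix m assume "m \<in> {n - int N .. n + int N}"
      thus "m \<in> (\<lambda>j. j + n) ` {- int N .. int N}" by (intro image_eqI[where x="m - n"]) auto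
    qed auto
    have "(\<Sum>m\<in>{n - int N .. n + int N}. h (m - n)) = (\<Sum>j\<in>{- int N .. int N}. h j)"
      unfolding im[symmetric] by (subst sum.reindex) (auto simp: inj_on_def)
    also have "\<dots> = 0" by (rule odd_sum_zero[of h, OF odd])
    finally show ?thesis .
  qed
  have ev: "eventually (\<lambda>N. (\<Sum>m\<in>{n - int N .. n + int N}. 1 / real_of_int m) - ?G 0
       = (\<Sum>m\<in>{n - int N .. n + int N} - {0}. ?G m)) sequentially"
    using eventually_ge_at_top[of "nat \<bar>n\<bar>"]
  proof eventually_elim
    case (elim N)
    have "0 \<in> {n - int N .. n + int N}" using elim by auto
    hence "(\<Sum>m\<in>{n - int N .. n + int N} - {0}. ?G m) = (\<Sum>m\<in>{n - int N .. n + int N}. ?G m) - ?G 0"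
      by (simp add: sum_diff1)
    also have "(\<Sum>m\<in>{n - int N .. n + int N}. ?G m) = (\<Sum>m\<in>{n - int N .. n + int N}. 1 / real_of_int m)"
      by (simp add: sum_subtractf hs)
    finally show ?case by simp
  qed
  have "(\<lambda>N::nat. (\<Sum>m\<in>{n - int N .. n + int N}. 1 / real_of_int m) - ?G 0) \<longlonglongrightarrow> 0 - ?G 0"
    by (intro tendsto_diff inv_sym_lim tendsto_const)
  hence "(\<lambda>N::nat. \<Sum>m\<in>{n - int N .. n + int N} - {0}. ?G m) \<longlonglongrightarrow> 0 - ?G 0"
    by (rule Lim_transform_eventually) (rule ev)
  thus ?thesis by simp
qed

lemma ident_aux:
  fixes y a n m Q D :: real
  assumes Q: "Q = y\<^sup>2 + a * (n - m)\<^sup>2" "Q \<noteq> 0" and D: "D = y\<^sup>2 + a * n\<^sup>2" "D \<noteq> 0" and m: "m \<noteq> 0"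
  shows "1 / Q / m = (a * n * (1 / Q) + (1 / m - a * (m - n) / Q)) / D"
proof -
  have "a * n * m + Q - a * (m - n) * m = D" unfolding Q(1) D(1) by (simp add: power2_eq_square algebra_simps)
  hence "(a * n * (1 / Q) + (1 / m - a * (m - n) / Q)) = D / (Q * m)"
    using Q(2) m by (simp add: field_simps)
  thus ?thesis using D(2) by simp
qed

lemma final_aux:
  fixes p n c y D :: real
  assumes "p \<noteq> 0" "y \<noteq> 0" "D \<noteq> 0"
  shows "(p\<^sup>2 * n * (c / y - 1 / D) + p\<^sup>2 * (- n) / D) / D = p * (p * n * c / (y * D) - 2 * p * n / D\<^sup>2)"
  using assms by (simp add: field_simps power2_eq_square)

lemma main_has_sum:
  fixes y :: real and n :: int assumes y: "y > 0"
  shows "((\<lambda>m. scrA (n - m) y / real_of_int m) has_sum (pi * scrB n y)) (UNIV - {0})"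
proof -
  define S :: "int set" where "S = UNIV - {0}"
  define C where "C = cosh y / sinh y / y"
  define D where "D = y\<^sup>2 + pi\<^sup>2 * (real_of_int n)\<^sup>2"
  define h :: "int \<Rightarrow> real" where "h j = pi\<^sup>2 * real_of_int j / (y\<^sup>2 + pi\<^sup>2 * (real_of_int j)\<^sup>2)" for j
  define T where "T m = scrA (n - m) y / real_of_int m" for m
  define F where "F N = {n - int N .. n + int N} - {0}" for N :: nat
  have Dpos: "D > 0" unfolding D_def using y by (intro add_pos_nonneg) auto
  have hU: "((\<lambda>m. scrA (n - m) y) has_sum C) UNIV"
  proof -
    have inj: "inj_on (\<lambda>m::int. n - m) UNIV" by (auto simp: inj_on_def)
    have im: "(\<lambda>m::int. n - m) ` UNIV = UNIV"
      by (auto simp: image_iff intro!: exI[where x="n - _"])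
    show ?thesis using has_sum_reindex[OF inj, of "\<lambda>k. scrA k y" C] scrA_has_sum[OF y]
      unfolding im C_def by (simp add: o_def)
  qed
  have hA: "((\<lambda>m. scrA (n - m) y) has_sum (C - scrA n y)) S"
  proof -
    have sm: "(\<lambda>m. scrA (n - m) y) summable_on S"
      using summable_on_subset_banach[OF has_sum_imp_summable[OF hU]] by simp
    have "((\<lambda>m. scrA (n - m) y) has_sum (scrA (n - 0) y + infsum (\<lambda>m. scrA (n - m) y) S)) (insert 0 S)"
      by (rule has_sum_insert) (simp add: S_def, rule has_sum_infsum[OF sm])
    moreover have "insert 0 S = UNIV" by (auto simp: S_def)
    ultimately have "scrA n y + infsum (\<lambda>m. scrA (n - m) y) S = C"
      using hU has_sum_unique by fastforce
    thus ?thesis using sm by (simp add: has_sum_iff algebra_simps)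
  qed
  have sT: "T summable_on S"
  proof -
    have "(\<lambda>m. scrA (n - m) y) summable_on S" using hA by (rule has_sum_imp_summable)
    hence "(\<lambda>m. norm (scrA (n - m) y)) summable_on S"
      by (rule summable_on_iff_abs_summable_on_real[THEN iffD1])
    hence "(\<lambda>m. norm (T m)) summable_on S"
    proof (rule Infinite_Sum.abs_summable_on_comparison_test)
      fix m assume "m \<in> S"
      hence m1: "\<bar>real_of_int m\<bar> \<ge> 1" by (auto simp: S_def)
      have a0: "\<bar>scrA (n - m) y\<bar> \<ge> 0" by simp
      have "\<bar>scrA (n - m) y\<bar> * 1 \<le> \<bar>scrA (n - m) y\<bar> * \<bar>real_of_int m\<bar>"
        by (rule mult_left_mono[OF m1 a0])
      hence "\<bar>scrA (n - m) y\<bar> / \<bar>real_of_int m\<bar> \<le> \<bar>scrA (n - m) y\<bar>"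
        using m1 by (simp add: divide_le_eq)
      thus "norm (T m) \<le> norm (scrA (n - m) y)" by (simp add: T_def abs_divide)
    qed
    thus ?thesis by (rule summable_on_iff_abs_summable_on_real[THEN iffD2])
  qed
  have ident: "T m = (pi\<^sup>2 * real_of_int n * scrA (n - m) y + (1 / real_of_int m - h (m - n))) / D"
    if "m \<noteq> 0" for m
  proof -
    have p: "y\<^sup>2 + pi\<^sup>2 * (real_of_int (n - m))\<^sup>2 > 0" using y by (intro add_pos_nonneg) auto
    have p': "y\<^sup>2 + pi\<^sup>2 * (real_of_int (m - n))\<^sup>2 = y\<^sup>2 + pi\<^sup>2 * (real_of_int (n - m))\<^sup>2"
      by (simp add: power2_commute)
    have m: "real_of_int m \<noteq> 0" using that by simp
    define Q where "Q = y\<^sup>2 + pi\<^sup>2 * (real_of_int n - real_of_int m)\<^sup>2"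
    have Q0: "Q \<noteq> 0" using p unfolding Q_def by simp
    have a: "scrA (n - m) y = 1 / Q" unfolding scrA_def Q_def by simp
    have b: "h (m - n) = pi\<^sup>2 * (real_of_int m - real_of_int n) / Q"
      unfolding h_def Q_def by (simp add: power2_commute)
    have D0: "D \<noteq> 0" using Dpos by simp
    show ?thesis unfolding T_def a b using ident_aux[OF Q_def Q0 D_def D0 m] by simp
  qed
  have Fsub: "finite (F N) \<and> F N \<subseteq> S" for N by (auto simp: F_def S_def)
  have Fev: "eventually (\<lambda>N. K \<subseteq> F N) sequentially" if "finite K" "K \<subseteq> S" for K
  proof -
    have b: "\<bar>k\<bar> \<le> sum abs K" if "k \<in> K" for k
      using member_le_sum[of k K abs] \<open>finite K\<close> that by auto
    show ?thesis using eventually_ge_at_top[of "nat (sum abs K + \<bar>n\<bar>)"]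
    proof eventually_elim
      case (elim N)
      show ?case
      proof
        fix k assume k: "k \<in> K"
        with b[OF k] elim have "k \<in> {n - int N .. n + int N}" by auto
        moreover have "k \<noteq> 0" using k \<open>K \<subseteq> S\<close> by (auto simp: S_def)
        ultimately show "k \<in> F N" by (auto simp: F_def)
      qed
    qed
  qed
  have l1: "(\<lambda>N. sum T (F N)) \<longlonglongrightarrow> infsum T S"
    by (rule has_sum_seq[OF has_sum_infsum[OF sT] Fsub Fev])
  have l2: "(\<lambda>N. sum (\<lambda>m. scrA (n - m) y) (F N)) \<longlonglongrightarrow> C - scrA n y"
    by (rule has_sum_seq[OF hA Fsub Fev])
  have hodd: "h (- j) = - h j" for j by (simp add: h_def)
  have l3: "(\<lambda>N. sum (\<lambda>m. 1 / real_of_int m - h (m - n)) (F N)) \<longlonglongrightarrow> h (- n)"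
    unfolding F_def by (rule G_lim[of h, OF hodd])
  have eqs: "sum T (F N) = (pi\<^sup>2 * real_of_int n * sum (\<lambda>m. scrA (n - m) y) (F N)
      + sum (\<lambda>m. 1 / real_of_int m - h (m - n)) (F N)) / D" for N
  proof -
    have "sum T (F N) = (\<Sum>m\<in>F N. (pi\<^sup>2 * real_of_int n * scrA (n - m) y + (1 / real_of_int m - h (m - n))) / D)"
      by (rule sum.cong) (auto simp: F_def ident)
    thus ?thesis by (simp add: sum_divide_distrib[symmetric] sum.distrib sum_distrib_left)
  qed
  have "(\<lambda>N. sum T (F N)) \<longlonglongrightarrow> (pi\<^sup>2 * real_of_int n * (C - scrA n y) + h (- n)) / D"
    unfolding eqs by (intro tendsto_intros l2 l3) (use Dpos in simp)
  with l1 have val: "infsum T S = (pi\<^sup>2 * real_of_int n * (C - scrA n y) + h (- n)) / D"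
    using LIMSEQ_unique by blast
  have sA: "scrA n y = 1 / D" by (simp add: scrA_def D_def)
  have sh: "h (- n) = pi\<^sup>2 * (- real_of_int n) / D" by (simp add: h_def D_def)
  have sB: "scrB n y = pi * real_of_int n * (cosh y / sinh y) / (y * D) - 2 * pi * real_of_int n / D\<^sup>2"
    by (simp add: scrB_def D_def)
  have "(pi\<^sup>2 * real_of_int n * (C - scrA n y) + h (- n)) / D = pi * scrB n y"
    unfolding sA sh sB C_def
    by (rule final_aux) (use y Dpos in auto)
  with val sT show ?thesis unfolding S_def T_def by (simp add: has_sum_iff)
qed

theorem lemma3p13:
  fixes y :: real
  assumes "y > 0"
  shows "\<forall>n::int. (\<lambda>m. scrA (n - m) y / real_of_int m) summable_on (UNIV - {0})
           \<and> disc_hilbert (\<lambda>k. scrA k y) n = scrB n y"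
proof
  fix n :: int
  have h: "((\<lambda>m. scrA (n - m) y / real_of_int m) has_sum (pi * scrB n y)) (UNIV - {0})"
    by (rule main_has_sum[OF assms])
  show "(\<lambda>m. scrA (n - m) y / real_of_int m) summable_on (UNIV - {0})
           \<and> disc_hilbert (\<lambda>k. scrA k y) n = scrB n y"
    using h by (simp add: has_sum_iff disc_hilbert_def)
qed

end
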